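(* Let $\theta>0$, let $L\ge 1$ be an integer, let $K(x,y)=\exp(-\theta|x-y|)$ on $[0,1]$, and let $\mathbf U=\{0\cdot 2^{-L},1\cdot 2^{-L},\dots,2^L\cdot 2^{-L}\}$ be the set of $M=2^L+1$ inducing points (written as a vector in some fixed order). Then there exists an invertible $M\times M$ matrix $\mathbf P_{\mathbf U}$ with $K(\mathbf U,\mathbf U)=\mathbf P_{\mathbf U}\mathbf P_{\mathbf U}^\top$ such that, for all $x\in[0,1]$, the row vector $\phi(x):=K(x,\mathbf U)\mathbf P_{\mathbf U}^{-\top}\in\mathbb R^{1\times M}$ has as its entries exactly the $M$ functions $\psi_{01}(x),\psi_{02}(x)$ and $\psi_{lm}(x)$ for $l=1,\dots,L$, $m\in\{1,3,\dots,2^l-1\}$ (defined in the context). Consequently, for every function $f$ on $[0,1]$, the inducing-point approximation satisfies $K(x,\mathbf U)[K(\mathbf U,\mathbf U)]^{-1}f(\mathbf U)=\phi(x)\mathbf w$ with $\mathbf w:=\mathbf P_{\mathbf U}^{-1}f(\mathbf U)$, and if $f$ is a centered Gaussian process with covariance $K$ then $\mathbf w\sim\mathcal N(\mathbf 0,\mathbf I_M)$. Moreover, for every $l\ge1$ and odd $m$, $\psi_{lm}$ vanishes outside $[(m-1)2^{-l},(m+1)2^{-l}]$.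
   Context: $K(x,\mathbf U)$ denotes the row vector $(K(x,u))_{u\in\mathbf U}$ and $K(\mathbf U,\mathbf U)$ the matrix $(K(u,u'))_{u,u'\in\mathbf U}$; $\mathbf P^{-\top}=(\mathbf P^{-1})^\top$. The functions on $[0,1]$ are $\psi_{01}(x)=\dfrac{e^{-\theta x}+e^{-\theta(1-x)}}{\sqrt{2(1+e^{-\theta})}}$, $\psi_{02}(x)=\dfrac{e^{-\theta x}-e^{-\theta(1-x)}}{\sqrt{2(1-e^{-\theta})}}$, and for $l\ge1$, odd $m\in\{1,3,\dots,2^l-1\}$: $\psi_{lm}(x)=\sqrt{\dfrac{2}{\sinh(2^{1-l}\theta)}}\sinh\big(\theta(x-(m-1)2^{-l})\big)$ if $(m-1)2^{-l}\le x\le m2^{-l}$; $\psi_{lm}(x)=\sqrt{\dfrac{2}{\sinh(2^{1-l}\theta)}}\sinh\big(\theta((m+1)2^{-l}-x)\big)$ if $m2^{-l}\le x\le (m+1)2^{-l}$; and $\psi_{lm}(x)=0$ otherwise. *)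

theory Defs
  imports "HOL-Probability.Probability" "Jordan_Normal_Form.Matrix"
begin

definition expK :: "real \<Rightarrow> real \<Rightarrow> real \<Rightarrow> real" where
  "expK \<theta> x y = exp (- \<theta> * \<bar>x - y\<bar>)"

definition ipt :: "nat \<Rightarrow> nat \<Rightarrow> real" where
  "ipt L i = real i / 2 ^ L"

definition nU :: "nat \<Rightarrow> nat" where
  "nU L = 2 ^ L + 1"

definition KUU :: "real \<Rightarrow> nat \<Rightarrow> real mat" where
  "KUU \<theta> L = mat (nU L) (nU L) (\<lambda>(i,j). expK \<theta> (ipt L i) (ipt L j))"

definition KxU :: "real \<Rightarrow> nat \<Rightarrow> real \<Rightarrow> real mat" where
  "KxU \<theta> L x = mat 1 (nU L) (\<lambda>(_,j). expK \<theta> x (ipt L j))"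

definition fU :: "nat \<Rightarrow> (real \<Rightarrow> real) \<Rightarrow> real vec" where
  "fU L f = vec (nU L) (\<lambda>i. f (ipt L i))"

definition mat_inv :: "real mat \<Rightarrow> real mat" where
  "mat_inv A = (SOME B. inverts_mat A B \<and> inverts_mat B A)"

(* the functions psi_{lm}; index (0,1), (0,2) gives psi_01, psi_02 *)
definition psi :: "real \<Rightarrow> nat \<times> nat \<Rightarrow> real \<Rightarrow> real" where
  "psi \<theta> lm x = (case lm of (l, m) \<Rightarrow>
     if l = 0 then
       (if m = 1 then (exp (- \<theta> * x) + exp (- \<theta> * (1 - x))) / sqrt (2 * (1 + exp (- \<theta>)))
        else (exp (- \<theta> * x) - exp (- \<theta> * (1 - x))) / sqrt (2 * (1 - exp (- \<theta>))))
     else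
       (if (real m - 1) / 2 ^ l \<le> x \<and> x \<le> real m / 2 ^ l then
          sqrt (2 / sinh ((2 / 2 ^ l) * \<theta>)) * sinh (\<theta> * (x - (real m - 1) / 2 ^ l))
        else if real m / 2 ^ l \<le> x \<and> x \<le> (real m + 1) / 2 ^ l then
          sqrt (2 / sinh ((2 / 2 ^ l) * \<theta>)) * sinh (\<theta> * ((real m + 1) / 2 ^ l - x))
        else 0))"

definition psi_index :: "nat \<Rightarrow> (nat \<times> nat) set" where
  "psi_index L = {(0,1), (0,2)} \<union> {(l, m). 1 \<le> l \<and> l \<le> L \<and> odd m \<and> m < 2 ^ l}"

definition normal_measure :: "real \<Rightarrow> real \<Rightarrow> real measure" where
  "normal_measure \<mu> v = (if v = 0 then return borel \<mu> else density lborel (normal_density \<mu> (sqrt v)))"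

(* X is an n-dimensional centred Gaussian random vector with covariance Sigma:
   every linear functional a.X is N(0, a^T Sigma a) (Cramer-Wold definition) *)
definition centered_mvn :: "'w measure \<Rightarrow> ('w \<Rightarrow> real vec) \<Rightarrow> nat \<Rightarrow> real mat \<Rightarrow> bool" where
  "centered_mvn \<Omega> X n \<Sigma> \<longleftrightarrow>
     (\<forall>\<omega>\<in>space \<Omega>. dim_vec (X \<omega>) = n) \<and>
     (\<forall>a. dim_vec a = n \<longrightarrow>
        (\<lambda>\<omega>. scalar_prod a (X \<omega>)) \<in> borel_measurable \<Omega> \<and>
        distr \<Omega> borel (\<lambda>\<omega>. scalar_prod a (X \<omega>)) = normal_measure 0 (scalar_prod a (\<Sigma> *\<^sub>v a)))"

definition centered_GP :: "'w measure \<Rightarrow> ('w \<Rightarrow> real \<Rightarrow> real) \<Rightarrow> (real \<Rightarrow> real \<Rightarrow> real) \<Rightarrow> bool" where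
  "centered_GP \<Omega> f C \<longleftrightarrow>
     (\<forall>ts. set ts \<subseteq> {0..1} \<longrightarrow>
        centered_mvn \<Omega> (\<lambda>\<omega>. vec (length ts) (\<lambda>i. f \<omega> (ts ! i))) (length ts)
          (mat (length ts) (length ts) (\<lambda>(i,j). C (ts ! i) (ts ! j))))"

end

theory Submission imports Defs "Jordan_Normal_Form.Determinant" begin
lemma cosh_r: "cosh (y::real) = (exp y + exp (-y))/2" by (simp add: cosh_def)
lemma sinh_r: "sinh (y::real) = (exp y - exp (-y))/2" by (simp add: sinh_def)

lemma local_id: fixes \<theta> h c x :: real assumes "h > 0"
shows "2*cosh(\<theta>*h) * exp(-\<theta>*\<bar>x-c\<bar>) = exp(-\<theta>*\<bar>x-(c-h)\<bar>) + exp(-\<theta>*\<bar>x-(c+h)\<bar>) + 2*(if c-h \<le> x \<and> x \<le> c then sinh(\<theta>*(x-(c-h))) else if c \<le> x \<and> x \<le> c+h then sinh(\<theta>*((c+h)-x)) else 0)"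
proof -
  have e: "exp a * exp b = exp (a+b)" for a b :: real by (simp add: exp_add)
  consider "x \<le> c-h" | "c-h \<le> x \<and> x \<le> c" | "c \<le> x \<and> x \<le> c+h" | "c + h \<le> x" by linarith
  then show ?thesis
  proof cases
    case 1
    then have "\<bar>x-c\<bar> = c - x" "\<bar>x-(c-h)\<bar> = c-h-x" "\<bar>x-(c+h)\<bar> = c+h-x" using assms by auto
    moreover have "\<not>(c-h \<le> x \<and> x \<le> c) \<or> x = c-h" "\<not>(c \<le> x \<and> x \<le> c+h)" using 1 assms by auto
    ultimately show ?thesis by (auto simp: cosh_r distrib_right e algebra_simps)
  next
    case 2
    then have "\<bar>x-c\<bar> = c - x" "\<bar>x-(c-h)\<bar> = x-(c-h)" "\<bar>x-(c+h)\<bar> = c+h-x" using assms by auto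
    then show ?thesis using 2 apply (auto simp: cosh_r sinh_r distrib_right distrib_left e algebra_simps)
      by (simp add: field_simps)
  next
    case 3
    then have "\<bar>x-c\<bar> = x - c" "\<bar>x-(c-h)\<bar> = x-(c-h)" "\<bar>x-(c+h)\<bar> = c+h-x" using assms by auto
    moreover have "\<not>(c-h \<le> x \<and> x \<le> c) \<or> x = c" using 3 by auto
    ultimately show ?thesis using 3 apply (auto simp: cosh_r sinh_r distrib_right distrib_left e algebra_simps)
      by (simp_all add: field_simps)
  next
    case 4
    then have "\<bar>x-c\<bar> = x - c" "\<bar>x-(c-h)\<bar> = x-(c-h)" "\<bar>x-(c+h)\<bar> = x-(c+h)" using assms by auto
    moreover have "\<not>(c-h \<le> x \<and> x \<le> c)" "\<not>(c \<le> x \<and> x \<le> c+h) \<or> x = c+h" using 4 assms by auto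
    ultimately show ?thesis by (auto simp: cosh_r distrib_right e algebra_simps)
  qed
qed

definition lev_set :: "nat \<Rightarrow> (nat \<times> nat) set" where
  "lev_set l = {(l', m). l' = l \<and> odd m \<and> m < 2 ^ l}"

lemma psi_index_0: "psi_index 0 = {(0,1),(0,2)}"
  unfolding psi_index_def by auto

lemma psi_index_Suc: "psi_index (Suc n) = psi_index n \<union> lev_set (Suc n)"
  unfolding psi_index_def lev_set_def by (auto simp: le_Suc_eq)

lemma lev_set_img: "lev_set (Suc n) = (\<lambda>k. (Suc n, 2*k+1)) ` {..<2^n}"
proof -
  have "(l, m) \<in> (\<lambda>k. (Suc n, 2*k+1)) ` {..<2^n}" if "l = Suc n" "odd m" "m < 2^Suc n" for l m :: nat
  proof -
    have "m = 2*(m div 2) + 1" using that(2) by presburger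
    moreover have "m div 2 < 2^n" using that(3) by auto
    ultimately show ?thesis using that(1) by (intro image_eqI[of _ _ "m div 2"]) auto
  qed
  then show ?thesis unfolding lev_set_def by auto
qed

lemma lev_set_fin: "finite (lev_set (Suc n))" and lev_set_card: "card (lev_set (Suc n)) = 2^n"
proof -
  show "finite (lev_set (Suc n))" unfolding lev_set_img by simp
  have "inj_on (\<lambda>k. (Suc n, 2*k+1)) {..<(2::nat)^n}" by (auto simp: inj_on_def)
  then show "card (lev_set (Suc n)) = 2^n" unfolding lev_set_img by (simp add: card_image)
qed

lemma psi_index_disj: "psi_index n \<inter> lev_set (Suc n) = {}"
  unfolding psi_index_def lev_set_def by auto

lemma psi_index_fin: "finite (psi_index n)" and psi_index_card: "card (psi_index n) = 2^n + 1"
proof -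
  have "finite (psi_index n) \<and> card (psi_index n) = 2^n + 1"
  proof (induction n)
    case 0 then show ?case by (simp add: psi_index_0)
  next
    case (Suc n)
    then show ?case unfolding psi_index_Suc
      by (simp add: card_Un_disjoint psi_index_disj lev_set_fin lev_set_card)
  qed
  then show "finite (psi_index n)" "card (psi_index n) = 2^n + 1" by auto
qed

lemma psi_index_cases: "i \<in> psi_index n \<Longrightarrow> i = (0,1) \<or> i = (0,2) \<or>
   (1 \<le> fst i \<and> fst i \<le> n \<and> odd (snd i) \<and> snd i < 2 ^ fst i)"
  unfolding psi_index_def by auto

abbreviation cc :: "real \<Rightarrow> nat \<Rightarrow> real" where
  "cc \<theta> l \<equiv> sqrt (2 / sinh ((2 / 2 ^ l) * \<theta>))"

lemma psi_zero_out: assumes "1 \<le> l" "y \<le> (real m - 1) / 2^l \<or> (real m + 1) / 2^l \<le> y"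
  shows "psi \<theta> (l,m) y = 0"
proof -
  have "(real m - 1) / 2^l < real m / 2^l" "real m / 2^l < (real m + 1) / 2^l"
    by (simp_all add: divide_strict_right_mono)
  then show ?thesis using assms unfolding psi_def by auto
qed

lemma psi_left: assumes "1 \<le> l" "(real m - 1) / 2^l \<le> y" "y \<le> real m / 2^l"
  shows "psi \<theta> (l,m) y = cc \<theta> l * sinh (\<theta> * (y - (real m - 1) / 2 ^ l))"
  using assms unfolding psi_def by auto

lemma psi_right: assumes "1 \<le> l" "real m / 2^l \<le> y" "y \<le> (real m + 1) / 2^l"
  shows "psi \<theta> (l,m) y = cc \<theta> l * sinh (\<theta> * ((real m + 1) / 2 ^ l - y))"
proof (cases "y \<le> real m / 2^l")
  case True
  then have y: "y = real m / 2^l" using assms by auto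
  have "y - (real m - 1) / 2 ^ l = (real m + 1) / 2 ^ l - y" unfolding y by (simp add: field_simps)
  moreover have "(real m - 1) / 2^l \<le> y" unfolding y by (simp add: divide_right_mono)
  ultimately show ?thesis using assms True unfolding psi_def by auto
next
  case False
  then show ?thesis using assms unfolding psi_def by auto
qed

lemma psi_grid_zero: assumes "1 \<le> l" "k \<noteq> m" "odd m"
  shows "psi \<theta> (l,m) (real k / 2^l) = 0"
proof (rule psi_zero_out[OF assms(1)])
  have "k < m \<or> m < k" using assms by auto
  then have "real k \<le> real m - 1 \<or> real m + 1 \<le> real k" by auto
  then show "real k / 2^l \<le> (real m - 1) / 2^l \<or> (real m + 1) / 2^l \<le> real k / 2^l"
    by (auto simp: divide_right_mono)
qed

lemma sinh_mid: "2 * cosh (\<theta> * ((b - a) / 2)) * sinh (\<theta> * ((a + b) / 2 - s))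
   = sinh (\<theta> * (a - s)) + sinh (\<theta> * (b - (s::real)))"
proof -
  have "\<theta> * (a - s) = \<theta> * ((a + b) / 2 - s) - \<theta> * ((b - a) / 2)"
       "\<theta> * (b - s) = \<theta> * ((a + b) / 2 - s) + \<theta> * ((b - a) / 2)" by (simp_all add: field_simps)
  then show ?thesis by (simp add: sinh_add sinh_diff)
qed

lemma exp_cosh: "2 * cosh D * exp X = exp (X + D) + exp (X - (D::real))"
  by (simp add: cosh_r distrib_right exp_add exp_diff field_simps exp_minus)

lemma exp_mid1: "2 * cosh (\<theta> * ((b - a) / 2)) * exp (-\<theta> * ((a + b) / 2))
   = exp (-\<theta> * a) + exp (-\<theta> * (b::real))"
proof -
  have "-\<theta> * a = -\<theta> * ((a + b) / 2) + \<theta> * ((b - a) / 2)"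
       "-\<theta> * b = -\<theta> * ((a + b) / 2) - \<theta> * ((b - a) / 2)" by (simp_all add: field_simps)
  then show ?thesis by (simp add: exp_cosh)
qed

lemma exp_mid2: "2 * cosh (\<theta> * ((b - a) / 2)) * exp (-\<theta> * (1 - (a + b) / 2))
   = exp (-\<theta> * (1 - a)) + exp (-\<theta> * (1 - (b::real)))"
proof -
  have "-\<theta> * (1 - a) = -\<theta> * (1 - (a + b) / 2) - \<theta> * ((b - a) / 2)"
       "-\<theta> * (1 - b) = -\<theta> * (1 - (a + b) / 2) + \<theta> * ((b - a) / 2)" by (simp_all add: field_simps)
  then show ?thesis by (simp add: exp_cosh add.commute)
qed

lemma mid_sinh: assumes "a \<le> b" "\<forall>y\<in>{a..b}. f y = C * sinh (\<theta> * (y - s))"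
  shows "2 * cosh (\<theta> * ((b - a) / 2)) * f ((a + b) / 2) = f a + f (b::real)"
proof -
  have "f ((a + b) / 2) = C * sinh (\<theta> * ((a + b) / 2 - s))" "f a = C * sinh (\<theta> * (a - s))"
    "f b = C * sinh (\<theta> * (b - s))" using assms by auto
  then show ?thesis using sinh_mid[of \<theta> b a s] by (simp add: algebra_simps)
qed

lemma conv_pow: assumes "l \<le> n" shows "real q / 2^l = real (q * 2^(n-l)) / (2::real)^n"
proof -
  have "(2::real)^n = 2^l * 2^(n-l)" using assms by (simp add: power_add[symmetric])
  then show ?thesis by simp
qed

lemma psi_mid: assumes "i \<in> psi_index n" "j < 2^n"
  shows "2 * cosh (\<theta> * ((real (j+1) / 2^n - real j / 2^n) / 2)) * psi \<theta> i ((real j / 2^n + real (j+1) / 2^n) / 2)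
     = psi \<theta> i (real j / 2^n) + psi \<theta> i (real (j+1) / 2^n)"
proof -
  define a where "a = real j / 2^n"
  define b where "b = real (j+1) / 2^n"
  have ab: "a \<le> b" unfolding a_def b_def by (simp add: divide_right_mono)
  have "i = (0,1) \<or> i = (0,2) \<or> (1 \<le> fst i \<and> fst i \<le> n \<and> odd (snd i) \<and> snd i < 2 ^ fst i)"
    using psi_index_cases[OF assms(1)] .
  moreover
  {
    assume i: "i = (0,1)"
    have "2 * cosh (\<theta> * ((b - a) / 2)) * psi \<theta> i ((a + b) / 2) = psi \<theta> i a + psi \<theta> i b"
      unfolding i psi_def using exp_mid1[of \<theta> b a] exp_mid2[of \<theta> b a]
      by (simp add: field_simps) (simp add: add_divide_distrib[symmetric] ac_simps)
  }
  moreover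
  {
    assume i: "i = (0,2)"
    have "2 * cosh (\<theta> * ((b - a) / 2)) * psi \<theta> i ((a + b) / 2) = psi \<theta> i a + psi \<theta> i b"
      unfolding i psi_def using exp_mid1[of \<theta> b a] exp_mid2[of \<theta> b a]
      by (simp add: field_simps) (simp add: add_divide_distrib[symmetric] diff_divide_distrib[symmetric] algebra_simps)
  }
  moreover
  {
    fix l m assume i: "i = (l,m)" and lm: "1 \<le> l" "l \<le> n" "odd m" "m < 2^l"
    define p :: nat where "p = 2^(n-l)"
    have m1: "m \<ge> 1" using lm by (cases m) auto
    have e1: "m * p = (m-1)*p + p" "(m+1)*p = m*p + p" using m1 by (auto simp: algebra_simps)
    have A1: "(real m - 1)/2^l = real ((m-1)*p) / 2^n"
      using conv_pow[OF lm(2), of "m-1"] m1 unfolding p_def by (simp add: of_nat_diff)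
    have A2: "real m/2^l = real (m*p) / 2^n"
      using conv_pow[OF lm(2), of "m"] unfolding p_def by simp
    have A3: "(real m + 1)/2^l = real ((m+1)*p) / 2^n"
      using conv_pow[OF lm(2), of "m+1"] unfolding p_def by (simp add: add.commute)
    have mono: "u \<le> v \<Longrightarrow> real u / (2::real)^n \<le> real v / 2^n" for u v :: nat
      by (simp add: divide_right_mono)
    have cs: "j+1 \<le> (m-1)*p \<or> ((m-1)*p \<le> j \<and> j+1 \<le> m*p) \<or> (m*p \<le> j \<and> j+1 \<le> (m+1)*p) \<or> (m+1)*p \<le> j"
      using e1 by linarith
    have "\<exists>C s. \<forall>y\<in>{a..b}. psi \<theta> i y = C * sinh (\<theta> * (y - s))"
    proof -
      {
        assume "j+1 \<le> (m-1)*p"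
        then have "b \<le> (real m - 1)/2^l" unfolding A1 b_def using mono by blast
        then have "\<forall>y\<in>{a..b}. psi \<theta> i y = 0 * sinh (\<theta> * (y - 0))"
          using psi_zero_out[OF lm(1)] unfolding i by auto
        then have ?thesis by blast
      }
      moreover
      {
        assume "(m+1)*p \<le> j"
        then have "(real m + 1)/2^l \<le> a" unfolding A3 a_def using mono by blast
        then have "\<forall>y\<in>{a..b}. psi \<theta> i y = 0 * sinh (\<theta> * (y - 0))"
          using psi_zero_out[OF lm(1)] unfolding i by auto
        then have ?thesis by blast
      }
      moreover
      {
        assume h: "(m-1)*p \<le> j" "j+1 \<le> m*p"
        then have "(real m - 1)/2^l \<le> a" "b \<le> real m/2^l" unfolding A1 A2 a_def b_def using mono by blast+
        then have "\<forall>y\<in>{a..b}. psi \<theta> i y = cc \<theta> l * sinh (\<theta> * (y - (real m - 1)/2^l))"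
          using psi_left[OF lm(1)] unfolding i by auto
        then have ?thesis by blast
      }
      moreover
      {
        assume h: "m*p \<le> j" "j+1 \<le> (m+1)*p"
        then have "real m/2^l \<le> a" "b \<le> (real m + 1)/2^l" unfolding A3 A2 a_def b_def using mono by blast+
        then have "\<forall>y\<in>{a..b}. psi \<theta> i y = cc \<theta> l * sinh (\<theta> * ((real m + 1)/2^l - y))"
          using psi_right[OF lm(1)] unfolding i by auto
        moreover have "sinh (\<theta> * ((real m + 1)/2^l - y)) = - sinh (\<theta> * (y - (real m + 1)/2^l))" for y
          by (metis minus_diff_eq mult_minus_right sinh_minus)
        ultimately have "\<forall>y\<in>{a..b}. psi \<theta> i y = (- cc \<theta> l) * sinh (\<theta> * (y - (real m + 1)/2^l))"
          by simp
        then have ?thesis by blast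
      }
      ultimately show ?thesis using cs by blast
    qed
    then have "2 * cosh (\<theta> * ((b - a) / 2)) * psi \<theta> i ((a + b) / 2) = psi \<theta> i a + psi \<theta> i b"
      using mid_sinh[OF ab] by blast
  }
  ultimately have "2 * cosh (\<theta> * ((b - a) / 2)) * psi \<theta> i ((a + b) / 2) = psi \<theta> i a + psi \<theta> i b"
    by (cases i) auto
  then show ?thesis unfolding a_def b_def .
qed

definition SS :: "real \<Rightarrow> nat \<Rightarrow> real \<Rightarrow> real \<Rightarrow> real" where
  "SS \<theta> n x y = (\<Sum>i\<in>psi_index n. psi \<theta> i x * psi \<theta> i y)"

lemma base_vals: assumes "\<theta> > 0" "0 \<le> x" "x \<le> 1"
  shows "psi \<theta> (0,1) x * psi \<theta> (0,1) 0 + psi \<theta> (0,2) x * psi \<theta> (0,2) 0 = exp (-\<theta> * \<bar>x - 0\<bar>)"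
    and "psi \<theta> (0,1) x * psi \<theta> (0,1) 1 + psi \<theta> (0,2) x * psi \<theta> (0,2) 1 = exp (-\<theta> * \<bar>x - 1\<bar>)"
proof -
  have p1: "2 * (1 + exp (-\<theta>)) > 0" by (simp add: add_pos_pos)
  have p2: "2 * (1 - exp (-\<theta>)) > 0" using assms by simp
  define s1 where "s1 = sqrt (2 * (1 + exp (-\<theta>)))"
  define s2 where "s2 = sqrt (2 * (1 - exp (-\<theta>)))"
  have s1: "s1 * s1 = 2 * (1 + exp (-\<theta>))" "s1 > 0" unfolding s1_def using p1 by (simp_all del: real_sqrt_mult)
  have s2: "s2 * s2 = 2 * (1 - exp (-\<theta>))" "s2 > 0" unfolding s2_def using p2 by (simp_all del: real_sqrt_mult)
  have c1: "A * (1 + exp (-\<theta>)) / (2 * (1 + exp (-\<theta>))) = A / 2" for A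
    using p1 by (simp add: field_simps)
  have c2: "A * (1 - exp (-\<theta>)) / (2 * (1 - exp (-\<theta>))) = A / 2" for A
    using p2 by (simp add: field_simps)
  have ps: "psi \<theta> (0,1) y = (exp (- \<theta> * y) + exp (- \<theta> * (1 - y))) / s1"
      "psi \<theta> (0,2) y = (exp (- \<theta> * y) - exp (- \<theta> * (1 - y))) / s2" for y
    unfolding psi_def s1_def s2_def by simp_all
  have v: "psi \<theta> (0,1) 0 = (1 + exp (-\<theta>)) / s1" "psi \<theta> (0,2) 0 = (1 - exp (-\<theta>)) / s2"
    "psi \<theta> (0,1) 1 = (1 + exp (-\<theta>)) / s1" "psi \<theta> (0,2) 1 = - ((1 - exp (-\<theta>)) / s2)"
    unfolding ps by (simp_all add: add.commute minus_divide_left)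
  show "psi \<theta> (0,1) x * psi \<theta> (0,1) 0 + psi \<theta> (0,2) x * psi \<theta> (0,2) 0 = exp (-\<theta> * \<bar>x - 0\<bar>)"
  proof -
    have "psi \<theta> (0,1) x * psi \<theta> (0,1) 0 + psi \<theta> (0,2) x * psi \<theta> (0,2) 0
       = ((exp (- \<theta> * x) + exp (- \<theta> * (1 - x))) * (1 + exp (-\<theta>)) / (s1 * s1)
        + (exp (- \<theta> * x) - exp (- \<theta> * (1 - x))) * (1 - exp (-\<theta>)) / (s2 * s2))"
      unfolding v ps[of x] by simp
    also have "\<dots> = exp (-\<theta> * x)" unfolding s1(1) s2(1) c1 c2 by (simp add: field_simps)
    finally show ?thesis using assms by simp
  qed
  show "psi \<theta> (0,1) x * psi \<theta> (0,1) 1 + psi \<theta> (0,2) x * psi \<theta> (0,2) 1 = exp (-\<theta> * \<bar>x - 1\<bar>)"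
  proof -
    have "psi \<theta> (0,1) x * psi \<theta> (0,1) 1 + psi \<theta> (0,2) x * psi \<theta> (0,2) 1
       = ((exp (- \<theta> * x) + exp (- \<theta> * (1 - x))) * (1 + exp (-\<theta>)) / (s1 * s1)
        - (exp (- \<theta> * x) - exp (- \<theta> * (1 - x))) * (1 - exp (-\<theta>)) / (s2 * s2))"
      unfolding v ps[of x] by simp
    also have "\<dots> = exp (-\<theta> * (1 - x))" unfolding s1(1) s2(1) c1 c2 by (simp add: field_simps)
    finally show ?thesis using assms by simp
  qed
qed

lemma lev_sum: assumes "k \<le> 2^Suc n"
  shows "(\<Sum>i\<in>lev_set (Suc n). psi \<theta> i x * psi \<theta> i (real k / 2^Suc n))
     = (if odd k then psi \<theta> (Suc n,k) x * psi \<theta> (Suc n,k) (real k / 2^Suc n) else 0)"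
proof -
  have z: "psi \<theta> i x * psi \<theta> i (real k / 2^Suc n) = 0" if "i \<in> lev_set (Suc n)" "i \<noteq> (Suc n, k)" for i
  proof -
    obtain l m where i0: "i = (l,m)" by (cases i)
    then have i: "i = (Suc n, m)" "odd m" using that(1) unfolding lev_set_def by auto
    have "m \<noteq> k" using that(2) i by auto
    then have "psi \<theta> (Suc n, m) (real k / 2^Suc n) = 0" by (intro psi_grid_zero) (use i in auto)
    then show ?thesis using i by simp
  qed
  show ?thesis
  proof (cases "odd k")
    case True
    have "k \<noteq> 2^Suc n" using True by auto
    then have "(Suc n, k) \<in> lev_set (Suc n)" using True assms unfolding lev_set_def by auto
    then have "(\<Sum>i\<in>lev_set (Suc n). psi \<theta> i x * psi \<theta> i (real k / 2^Suc n))
       = psi \<theta> (Suc n,k) x * psi \<theta> (Suc n,k) (real k / 2^Suc n)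
         + (\<Sum>i\<in>lev_set (Suc n) - {(Suc n, k)}. psi \<theta> i x * psi \<theta> i (real k / 2^Suc n))"
      by (simp add: sum.remove lev_set_fin)
    also have "(\<Sum>i\<in>lev_set (Suc n) - {(Suc n, k)}. psi \<theta> i x * psi \<theta> i (real k / 2^Suc n)) = 0"
      by (rule sum.neutral) (use z in auto)
    finally show ?thesis using True by simp
  next
    case False
    have "(Suc n, k) \<notin> lev_set (Suc n)" using False unfolding lev_set_def by auto
    then have "(\<Sum>i\<in>lev_set (Suc n). psi \<theta> i x * psi \<theta> i (real k / 2^Suc n)) = 0"
      by (intro sum.neutral) (use z in blast)
    then show ?thesis using False by simp
  qed
qed

lemma core: assumes "\<theta> > 0" "0 \<le> x" "x \<le> 1"
  shows "k \<le> 2^n \<Longrightarrow> SS \<theta> n x (real k / 2^n) = exp (-\<theta> * \<bar>x - real k / 2^n\<bar>)"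
proof (induction n arbitrary: k)
  case 0
  then have "k = 0 \<or> k = 1" by auto
  moreover have "SS \<theta> 0 x y = psi \<theta> (0,1) x * psi \<theta> (0,1) y + psi \<theta> (0,2) x * psi \<theta> (0,2) y" for y
    unfolding SS_def psi_index_0 by simp
  ultimately show ?case using base_vals[OF assms] by auto
next
  case (Suc n)
  have split: "SS \<theta> (Suc n) x y = SS \<theta> n x y + (\<Sum>i\<in>lev_set (Suc n). psi \<theta> i x * psi \<theta> i y)" for y
    unfolding SS_def psi_index_Suc
    by (rule sum.union_disjoint) (simp_all add: psi_index_fin lev_set_fin psi_index_disj)
  show ?case
  proof (cases "odd k")
    case False
    then obtain j where k: "k = 2 * j" by (metis evenE)
    have y: "real k / 2^Suc n = real j / 2^n" unfolding k by simp
    have "j \<le> 2^n" using Suc.prems k by simp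
    then show ?thesis using split[of "real k / 2^Suc n"] lev_sum[OF Suc.prems, of \<theta> x] False Suc.IH
      unfolding y by simp
  next
    case True
    then obtain j where k: "k = 2 * j + 1" by (metis oddE)
    have j: "j < 2^n" using Suc.prems k True by auto
    define a where "a = real j / 2^n"
    define b where "b = real (j+1) / 2^n"
    define y where "y = real k / 2^Suc n"
    define h where "h = 1 / (2::real)^Suc n"
    have h0: "h > 0" unfolding h_def by simp
    have yab: "y = (a + b) / 2" "h = (b - a) / 2" "a = y - h" "b = y + h"
      unfolding a_def b_def y_def h_def k by (simp_all add: field_simps)
    have e1: "(real k - 1) / 2^Suc n = y - h" "real k / 2^Suc n = y" "(real k + 1) / 2^Suc n = y + h"
      unfolding y_def h_def by (simp_all add: field_simps)
    have mid: "2 * cosh (\<theta> * h) * SS \<theta> n x y = SS \<theta> n x a + SS \<theta> n x b"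
    proof -
      have "2 * cosh (\<theta> * h) * SS \<theta> n x y = (\<Sum>i\<in>psi_index n. psi \<theta> i x * (2 * cosh (\<theta> * h) * psi \<theta> i y))"
        unfolding SS_def by (simp add: sum_distrib_left algebra_simps)
      also have "\<dots> = (\<Sum>i\<in>psi_index n. psi \<theta> i x * (psi \<theta> i a + psi \<theta> i b))"
        by (rule sum.cong[OF refl]) (use psi_mid[OF _ j] in \<open>simp add: yab(1,2) a_def b_def\<close>)
      also have "\<dots> = SS \<theta> n x a + SS \<theta> n x b"
        unfolding SS_def by (simp add: sum.distrib algebra_simps)
      finally show ?thesis .
    qed
    have Ka: "SS \<theta> n x a = exp (-\<theta> * \<bar>x - a\<bar>)" unfolding a_def using Suc.IH j by simp
    have Kb: "SS \<theta> n x b = exp (-\<theta> * \<bar>x - b\<bar>)" unfolding b_def using Suc.IH[of "j+1"] j by simp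
    define hat where "hat = (if y-h \<le> x \<and> x \<le> y then sinh(\<theta>*(x-(y-h))) else if y \<le> x \<and> x \<le> y+h then sinh(\<theta>*((y+h)-x)) else 0)"
    have px: "psi \<theta> (Suc n, k) x = cc \<theta> (Suc n) * hat"
      unfolding psi_def hat_def prod.case using e1 by simp
    have py: "psi \<theta> (Suc n, k) y = cc \<theta> (Suc n) * sinh (\<theta> * h)"
      using psi_left[of "Suc n" k "y" \<theta>] e1 h0 by simp
    have sh: "sinh (\<theta> * h) > 0" using h0 assms(1) by simp
    have cc2: "cc \<theta> (Suc n) * cc \<theta> (Suc n) = 1 / (sinh (\<theta> * h) * cosh (\<theta> * h))"
    proof -
      have "(2 / 2 ^ Suc n) * \<theta> = 2 * (\<theta> * h)" unfolding h_def by simp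
      then have "2 / sinh ((2 / 2 ^ Suc n) * \<theta>) = 1 / (sinh (\<theta> * h) * cosh (\<theta> * h))"
        by (simp add: sinh_double)
      moreover have "2 / sinh ((2 / 2 ^ Suc n) * \<theta>) \<ge> 0" using sh \<open>_ = 2 * (\<theta> * h)\<close>
        by (simp add: sinh_double)
      moreover have "A \<ge> 0 \<Longrightarrow> sqrt A * sqrt A = A" for A :: real by simp
      ultimately show ?thesis by metis
    qed
    have lev: "psi \<theta> (Suc n, k) x * psi \<theta> (Suc n, k) y = hat / cosh (\<theta> * h)"
    proof -
      have "psi \<theta> (Suc n, k) x * psi \<theta> (Suc n, k) y = (cc \<theta> (Suc n) * cc \<theta> (Suc n)) * sinh (\<theta> * h) * hat"
        unfolding px py by (simp only: ac_simps)
      also have "\<dots> = hat / cosh (\<theta> * h)" unfolding cc2 using sh h0 assms(1) by (simp add: field_simps)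
      finally show ?thesis .
    qed
    have loc: "2*cosh(\<theta>*h) * exp(-\<theta>*\<bar>x-y\<bar>) = exp(-\<theta>*\<bar>x-a\<bar>) + exp(-\<theta>*\<bar>x-b\<bar>) + 2 * hat"
      unfolding hat_def yab(3,4) by (rule local_id[OF h0])
    have "SS \<theta> (Suc n) x y = SS \<theta> n x y + hat / cosh (\<theta> * h)"
      using split[of y] lev_sum[OF Suc.prems, of \<theta> x] True lev unfolding y_def by simp
    also have "\<dots> = exp (-\<theta> * \<bar>x - y\<bar>)"
    proof -
      have c: "cosh (\<theta> * h) > 0" by simp
      have "2 * cosh (\<theta> * h) * (SS \<theta> n x y + hat / cosh (\<theta> * h)) = 2 * cosh (\<theta> * h) * exp (-\<theta> * \<bar>x - y\<bar>)"
        using mid Ka Kb loc c by (simp add: algebra_simps)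
      then show ?thesis using c by simp
    qed
    finally show ?thesis unfolding y_def .
  qed
qed

lemma lin_indep: assumes "\<theta> > 0"
  shows "n \<le> 2^L \<Longrightarrow> (\<forall>x\<in>{0..1}. (\<Sum>k\<le>n. v k * exp (-\<theta> * \<bar>x - real k / 2^L\<bar>)) = 0) \<Longrightarrow> \<forall>k\<le>n. v k = 0"
proof (induction n)
  case 0
  then show ?case by auto
next
  case (Suc n)
  define p where "p = real n / 2^L"
  define p' where "p' = real (Suc n) / 2^L"
  define x2 where "x2 = (p + p') / 2"
  define d where "d = p' - x2"
  have rs: "real (Suc n) \<le> 2^L" using Suc.prems(1) by (metis of_nat_le_iff of_nat_numeral of_nat_power)
  have pp: "p < p'" "0 \<le> p" "p' \<le> 1" unfolding p_def p'_def using rs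
    by (simp_all add: divide_strict_right_mono divide_le_eq)
  have d0: "d > 0" unfolding d_def x2_def using pp by simp
  define A where "A = (\<Sum>k\<le>n. v k * exp (\<theta> * (real k / 2^L)))"
  have low: "(\<Sum>k\<le>n. v k * exp (-\<theta> * \<bar>x - real k / 2^L\<bar>)) = exp (-\<theta> * x) * A" if "p \<le> x" for x
  proof -
    have "(\<Sum>k\<le>n. v k * exp (-\<theta> * \<bar>x - real k / 2^L\<bar>)) = (\<Sum>k\<le>n. exp (-\<theta> * x) * (v k * exp (\<theta> * (real k / 2^L))))"
    proof (rule sum.cong[OF refl])
      fix k assume "k \<in> {..n}"
      then have "real k / 2^L \<le> p" unfolding p_def by (simp add: divide_right_mono)
      then have "\<bar>x - real k / 2^L\<bar> = x - real k / 2^L" using that by simp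
      then show "v k * exp (-\<theta> * \<bar>x - real k / 2^L\<bar>) = exp (-\<theta> * x) * (v k * exp (\<theta> * (real k / 2^L)))"
        by (simp add: algebra_simps exp_add[symmetric] exp_diff)
    qed
    then show ?thesis unfolding A_def by (simp add: sum_distrib_left)
  qed
  have F: "(\<Sum>k\<le>n. v k * exp (-\<theta> * \<bar>x - real k / 2^L\<bar>)) + v (Suc n) * exp (-\<theta> * \<bar>x - p'\<bar>) = 0"
    if "x \<in> {0..1}" for x
    using Suc.prems(2) that unfolding p'_def by simp
  have x2r: "p \<le> x2" "x2 \<le> 1" "0 \<le> x2" using pp unfolding x2_def by auto
  have E1: "exp (-\<theta> * p') * A + v (Suc n) = 0" using F[of p'] low[of p'] pp by simp
  have E2: "exp (-\<theta> * x2) * A + v (Suc n) * exp (-\<theta> * d) = 0"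
  proof -
    have "\<bar>x2 - p'\<bar> = d" unfolding d_def x2_def using pp by (simp add: field_simps)
    then show ?thesis using F[of x2] low[of x2] x2r by simp
  qed
  have "exp (-\<theta> * x2) = exp (\<theta> * d) * exp (-\<theta> * p')" unfolding d_def
    by (simp add: exp_add[symmetric] algebra_simps)
  then have "exp (\<theta> * d) * (- v (Suc n)) + v (Suc n) * exp (-\<theta> * d) = 0"
    using E1 E2 by (metis (no_types, lifting) add.commute add_eq_0_iff mult.assoc)
  then have "v (Suc n) * (exp (-\<theta> * d) - exp (\<theta> * d)) = 0" by (simp add: algebra_simps)
  moreover have "exp (-\<theta> * d) < exp (\<theta> * d)" using d0 assms by simp
  ultimately have vS: "v (Suc n) = 0" using d0 assms by auto
  have "\<forall>x\<in>{0..1}. (\<Sum>k\<le>n. v k * exp (-\<theta> * \<bar>x - real k / 2^L\<bar>)) = 0"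
    using F vS by simp
  then have "\<forall>k\<le>n. v k = 0" using Suc.IH Suc.prems(1) by simp
  then show ?case using vS le_Suc_eq by auto
qed

lemma inv_props: assumes A: "(A :: real mat) \<in> carrier_mat n n" and d: "det A \<noteq> 0"
  shows "invertible_mat A" "mat_inv A \<in> carrier_mat n n" "A * mat_inv A = 1\<^sub>m n" "mat_inv A * A = 1\<^sub>m n"
proof -
  from det_non_zero_imp_unit[OF A d, of undefined]
  obtain B where B: "B \<in> carrier_mat n n" "A * B = 1\<^sub>m n" "B * A = 1\<^sub>m n"
    unfolding Units_def ring_mat_def by auto
  have ex: "\<exists>B. inverts_mat A B \<and> inverts_mat B A"
    using B A unfolding inverts_mat_def by (intro exI[of _ B]) auto
  then show "invertible_mat A" using A unfolding invertible_mat_def square_mat.simps by auto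
  have s: "inverts_mat A (mat_inv A) \<and> inverts_mat (mat_inv A) A"
    unfolding mat_inv_def by (rule someI_ex[OF ex])
  then have 1: "A * mat_inv A = 1\<^sub>m n" "mat_inv A * A = 1\<^sub>m (dim_row (mat_inv A))"
    using A unfolding inverts_mat_def by auto
  have "dim_col (A * mat_inv A) = n" using 1 by simp
  then have c: "dim_col (mat_inv A) = n" by simp
  have "dim_col (mat_inv A * A) = dim_row (mat_inv A)" using 1 by simp
  then have r: "dim_row (mat_inv A) = n" using A by simp
  show "mat_inv A \<in> carrier_mat n n" using r c by auto
  show "A * mat_inv A = 1\<^sub>m n" by (rule 1(1))
  show "mat_inv A * A = 1\<^sub>m n" using 1(2) r by simp
qed

lemma gp_part:
  fixes P Pi K :: "real mat" and X :: "'w \<Rightarrow> real vec"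
  assumes Pc: "P \<in> carrier_mat n n" and Pic: "Pi \<in> carrier_mat n n" and PiP: "Pi * P = 1\<^sub>m n"
    and KP: "K = P * transpose_mat P" and mvn: "centered_mvn \<Omega> X n K"
    and Xc: "\<And>\<omega>. X \<omega> \<in> carrier_vec n"
  shows "centered_mvn \<Omega> (\<lambda>\<omega>. Pi *\<^sub>v X \<omega>) n (1\<^sub>m n)"
proof -
  have PT: "transpose_mat P \<in> carrier_mat n n" using Pc by (simp only: transpose_carrier_mat)
  have PiPT: "transpose_mat P * transpose_mat Pi = 1\<^sub>m n"
    using transpose_mult[OF Pic Pc] PiP by simp
  have M: "\<forall>a. dim_vec a = n \<longrightarrow>
        (\<lambda>\<omega>. scalar_prod a (X \<omega>)) \<in> borel_measurable \<Omega> \<and>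
        distr \<Omega> borel (\<lambda>\<omega>. scalar_prod a (X \<omega>)) = normal_measure 0 (scalar_prod a (K *\<^sub>v a))"
    using mvn unfolding centered_mvn_def by (rule conjunct2)
  have D: "\<forall>\<omega>\<in>space \<Omega>. dim_vec (Pi *\<^sub>v X \<omega>) = n" using Pic by simp
  have A: "(\<lambda>\<omega>. a \<bullet> (Pi *\<^sub>v X \<omega>)) \<in> borel_measurable \<Omega> \<and>
        distr \<Omega> borel (\<lambda>\<omega>. a \<bullet> (Pi *\<^sub>v X \<omega>)) = normal_measure 0 (a \<bullet> (1\<^sub>m n *\<^sub>v a))"
    if a: "dim_vec a = n" for a
  proof -
    have ac: "a \<in> carrier_vec n" using a by (rule carrier_vecI)
    define b where "b = transpose_mat Pi *\<^sub>v a"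
    have bc: "b \<in> carrier_vec n" unfolding b_def by (rule carrier_vecI) (use Pic in simp)
    have bd: "dim_vec b = n" using bc by simp
    have eq: "(\<lambda>\<omega>. a \<bullet> (Pi *\<^sub>v X \<omega>)) = (\<lambda>\<omega>. b \<bullet> X \<omega>)"
    proof
      fix \<omega> show "a \<bullet> (Pi *\<^sub>v X \<omega>) = b \<bullet> X \<omega>"
        unfolding b_def by (rule transpose_vec_mult_scalar[OF Pic Xc ac, symmetric])
    qed
    have Ptb: "transpose_mat P *\<^sub>v b = a"
    proof -
      have "transpose_mat P *\<^sub>v b = (transpose_mat P * transpose_mat Pi) *\<^sub>v a"
        unfolding b_def by (rule assoc_mult_mat_vec[OF PT _ ac, symmetric]) (use Pic in simp)
      also have "\<dots> = a" unfolding PiPT using ac by (rule one_mult_mat_vec)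
      finally show ?thesis .
    qed
    have var: "b \<bullet> (K *\<^sub>v b) = a \<bullet> (1\<^sub>m n *\<^sub>v a)"
    proof -
      have "K *\<^sub>v b = P *\<^sub>v (transpose_mat P *\<^sub>v b)"
        unfolding KP by (rule assoc_mult_mat_vec[OF Pc PT bc])
      moreover have "(transpose_mat P *\<^sub>v b) \<bullet> (transpose_mat P *\<^sub>v b) = b \<bullet> (P *\<^sub>v (transpose_mat P *\<^sub>v b))"
        by (rule transpose_vec_mult_scalar[OF Pc _ bc]) (use PT bc in simp)
      ultimately have "b \<bullet> (K *\<^sub>v b) = a \<bullet> a" unfolding Ptb by simp
      then show ?thesis using one_mult_mat_vec[OF ac] by simp
    qed
    have m: "(\<lambda>\<omega>. b \<bullet> X \<omega>) \<in> borel_measurable \<Omega> \<and>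
        distr \<Omega> borel (\<lambda>\<omega>. b \<bullet> X \<omega>) = normal_measure 0 (b \<bullet> (K *\<^sub>v b))"
    proof -
      from M have "dim_vec b = n \<longrightarrow> (\<lambda>\<omega>. b \<bullet> X \<omega>) \<in> borel_measurable \<Omega> \<and>
        distr \<Omega> borel (\<lambda>\<omega>. b \<bullet> X \<omega>) = normal_measure 0 (b \<bullet> (K *\<^sub>v b))" by (rule spec)
      then show ?thesis using bd by (rule mp)
    qed
    show ?thesis unfolding eq var[symmetric] by (rule m)
  qed
  show ?thesis unfolding centered_mvn_def
  proof (rule conjI)
    show "\<forall>\<omega>\<in>space \<Omega>. dim_vec (Pi *\<^sub>v X \<omega>) = n" by (rule D)
    show "\<forall>a. dim_vec a = n \<longrightarrow> (\<lambda>\<omega>. a \<bullet> (Pi *\<^sub>v X \<omega>)) \<in> borel_measurable \<Omega> \<and>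
        distr \<Omega> borel (\<lambda>\<omega>. a \<bullet> (Pi *\<^sub>v X \<omega>)) = normal_measure 0 (a \<bullet> (1\<^sub>m n *\<^sub>v a))"
      by (intro allI impI) (rule A)
  qed
qed


theorem theorem1:
  fixes \<theta> :: real and L :: nat
  assumes "\<theta> > 0" and "L \<ge> 1"
  shows "\<exists>P. P \<in> carrier_mat (nU L) (nU L) \<and> invertible_mat P \<and>
           KUU \<theta> L = P * transpose_mat P \<and>
           (\<exists>\<sigma>. bij_betw \<sigma> {..<nU L} (psi_index L) \<and>
              (\<forall>x\<in>{0..1}. \<forall>i<nU L.
                 (KxU \<theta> L x * mat_inv (transpose_mat P)) $$ (0, i) = psi \<theta> (\<sigma> i) x)) \<and>
           (\<forall>f. \<forall>x\<in>{0..1}.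
              KxU \<theta> L x * mat_inv (KUU \<theta> L) *\<^sub>v fU L f
              = (KxU \<theta> L x * mat_inv (transpose_mat P)) *\<^sub>v (mat_inv P *\<^sub>v fU L f)) \<and>
           (\<forall>(\<Omega> :: 'w measure) f. prob_space \<Omega> \<longrightarrow> centered_GP \<Omega> f (expK \<theta>) \<longrightarrow>
              centered_mvn \<Omega> (\<lambda>\<omega>. mat_inv P *\<^sub>v fU L (f \<omega>)) (nU L) (1\<^sub>m (nU L)))
         \<and> (\<forall>l m. 1 \<le> l \<and> odd m \<and> m < 2 ^ l \<longrightarrow>
              (\<forall>x\<in>{0..1}. x \<notin> {(real m - 1) / 2 ^ l .. (real m + 1) / 2 ^ l} \<longrightarrow> psi \<theta> (l, m) x = 0))"
proof -
  note th = assms(1)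
  let ?M = "nU L"
  obtain \<sigma> where \<sigma>: "bij_betw \<sigma> {..<nU L} (psi_index L)"
    using finite_same_card_bij[of "{..<nU L}" "psi_index L"] psi_index_fin psi_index_card
    unfolding nU_def by auto
  have kle: "k < nU L \<Longrightarrow> k \<le> 2^L" for k unfolding nU_def by simp
  have ipt01: "ipt L k \<in> {0..1}" if "k < nU L" for k
  proof -
    have "real k \<le> 2^L" using kle[OF that] by (metis of_nat_le_iff of_nat_numeral of_nat_power)
    then show ?thesis unfolding ipt_def by (simp add: divide_le_eq)
  qed
  have KI: "(\<Sum>i<nU L. psi \<theta> (\<sigma> i) x * psi \<theta> (\<sigma> i) (ipt L k)) = expK \<theta> x (ipt L k)"
    if x: "x \<in> {0..1}" and k: "k < nU L" for x k
  proof -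
    have "(\<Sum>i<nU L. psi \<theta> (\<sigma> i) x * psi \<theta> (\<sigma> i) (ipt L k)) = SS \<theta> L x (ipt L k)"
      unfolding SS_def using sum.reindex_bij_betw[OF \<sigma>, of "\<lambda>s. psi \<theta> s x * psi \<theta> s (ipt L k)"] by simp
    also have "\<dots> = expK \<theta> x (ipt L k)"
      unfolding ipt_def expK_def using core[OF th, of x, OF _ _ kle[OF k]] x by simp
    finally show ?thesis .
  qed
  define P where "P = mat (nU L) (nU L) (\<lambda>(k,i). psi \<theta> (\<sigma> i) (ipt L k))"
  define Ps where "Ps x = mat 1 (nU L) (\<lambda>(_,i). psi \<theta> (\<sigma> i) x)" for x
  have Pc: "P \<in> carrier_mat ?M ?M" "transpose_mat P \<in> carrier_mat ?M ?M" unfolding P_def by auto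
  have Psc: "Ps x \<in> carrier_mat 1 ?M" for x unfolding Ps_def by auto
  have Kxc: "KxU \<theta> L x \<in> carrier_mat 1 ?M" for x unfolding KxU_def by auto
  have KUc: "KUU \<theta> L \<in> carrier_mat ?M ?M" unfolding KUU_def by auto
  have KP: "KUU \<theta> L = P * transpose_mat P"
  proof (rule eq_matI)
    fix j k assume jk: "j < dim_row (P * transpose_mat P)" "k < dim_col (P * transpose_mat P)"
    then have jk': "j < nU L" "k < nU L" unfolding P_def by auto
    show "KUU \<theta> L $$ (j, k) = (P * transpose_mat P) $$ (j, k)"
      using jk' KI[OF ipt01[OF jk'(1)] jk'(2)] unfolding KUU_def P_def
      by (simp add: scalar_prod_def atLeast0LessThan)
  qed (auto simp: KUU_def P_def)
  have KxP: "KxU \<theta> L x = Ps x * transpose_mat P" if x: "x \<in> {0..1}" for x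
  proof (rule eq_matI)
    fix j k assume jk: "j < dim_row (Ps x * transpose_mat P)" "k < dim_col (Ps x * transpose_mat P)"
    then have jk': "j = 0" "k < nU L" unfolding P_def Ps_def by auto
    show "KxU \<theta> L x $$ (j, k) = (Ps x * transpose_mat P) $$ (j, k)"
      using jk' KI[OF x jk'(2)] unfolding KxU_def P_def Ps_def
      by (simp add: scalar_prod_def atLeast0LessThan)
  qed (auto simp: KxU_def P_def Ps_def)
  have detPT: "det (transpose_mat P) \<noteq> 0"
  proof
    assume "det (transpose_mat P) = 0"
    then obtain v where v: "v \<in> carrier_vec ?M" "v \<noteq> 0\<^sub>v ?M" "transpose_mat P *\<^sub>v v = 0\<^sub>v ?M"
      using det_0_iff_vec_prod_zero[OF Pc(2)] by auto
    have z: "(\<Sum>k<nU L. psi \<theta> (\<sigma> i) (ipt L k) * v $ k) = 0" if i: "i < nU L" for i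
    proof -
      have "(transpose_mat P *\<^sub>v v) $ i = 0" using v(3) i by simp
      then show ?thesis using i v(1) unfolding P_def by (simp add: scalar_prod_def atLeast0LessThan)
    qed
    have "\<forall>x\<in>{0..1}. (\<Sum>k\<le>2^L. (v $ k) * exp (-\<theta> * \<bar>x - real k / 2^L\<bar>)) = 0"
    proof
      fix x :: real assume x: "x \<in> {0..1}"
      have "(\<Sum>k\<le>2^L. (v $ k) * exp (-\<theta> * \<bar>x - real k / 2^L\<bar>)) = (\<Sum>k<nU L. (v $ k) * expK \<theta> x (ipt L k))"
        unfolding nU_def expK_def ipt_def by (simp add: lessThan_Suc_atMost)
      also have "\<dots> = (\<Sum>k<nU L. \<Sum>i<nU L. psi \<theta> (\<sigma> i) x * (psi \<theta> (\<sigma> i) (ipt L k) * v $ k))"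
        by (rule sum.cong[OF refl]) (simp add: KI[OF x, symmetric] sum_distrib_left algebra_simps)
      also have "\<dots> = (\<Sum>i<nU L. psi \<theta> (\<sigma> i) x * (\<Sum>k<nU L. psi \<theta> (\<sigma> i) (ipt L k) * v $ k))"
        by (subst sum.swap) (simp add: sum_distrib_left)
      also have "\<dots> = 0" using z by simp
      finally show "(\<Sum>k\<le>2^L. (v $ k) * exp (-\<theta> * \<bar>x - real k / 2^L\<bar>)) = 0" .
    qed
    then have "\<forall>k\<le>2^L. v $ k = 0" using lin_indep[OF th, of "2^L" L "\<lambda>k. v $ k"] by simp
    then have "v = 0\<^sub>v ?M" using v(1) unfolding nU_def by (intro eq_vecI) auto
    then show False using v(2) by simp
  qed
  have detP: "det P \<noteq> 0" using detPT det_transpose[OF Pc(1)] by simp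
  note IP = inv_props[OF Pc(1) detP]
  note IT = inv_props[OF Pc(2) detPT]
  define Pi where "Pi = mat_inv P"
  define Ti where "Ti = mat_inv (transpose_mat P)"
  have phi: "KxU \<theta> L x * Ti = Ps x" if x: "x \<in> {0..1}" for x
  proof -
    have "KxU \<theta> L x * Ti = Ps x * (transpose_mat P * Ti)"
      unfolding KxP[OF x] Ti_def using Psc Pc IT by (simp add: assoc_mult_mat[of _ 1 ?M _ ?M _ ?M])
    also have "\<dots> = Ps x" unfolding Ti_def IT(3) using Psc[of x] by simp
    finally show ?thesis .
  qed
  have detK: "det (KUU \<theta> L) \<noteq> 0" unfolding KP using det_mult[OF Pc] detP detPT by simp
  note IK = inv_props[OF KUc detK]
  have Kinv: "mat_inv (KUU \<theta> L) = Ti * Pi"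
  proof -
    have c: "Ti * Pi \<in> carrier_mat ?M ?M" using IT IP unfolding Ti_def Pi_def by auto
    have Tc: "Ti \<in> carrier_mat ?M ?M" and Pic: "Pi \<in> carrier_mat ?M ?M" unfolding Ti_def Pi_def using IT IP by auto
    have a1: "(P * transpose_mat P) * (Ti * Pi) = P * (transpose_mat P * (Ti * Pi))"
      by (rule assoc_mult_mat[OF Pc(1) Pc(2) c])
    have a2: "transpose_mat P * (Ti * Pi) = (transpose_mat P * Ti) * Pi"
      by (rule assoc_mult_mat[OF Pc(2) Tc Pic, symmetric])
    have e: "transpose_mat P * Ti = 1\<^sub>m ?M" unfolding Ti_def by (rule IT(3))
    have e2: "1\<^sub>m ?M * Pi = Pi" using Pic by (rule left_mult_one_mat)
    have 1: "KUU \<theta> L * (Ti * Pi) = 1\<^sub>m ?M" unfolding KP a1 a2 e e2 unfolding Pi_def by (rule IP(3))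
    have "mat_inv (KUU \<theta> L) = mat_inv (KUU \<theta> L) * (KUU \<theta> L * (Ti * Pi))" unfolding 1 using IK by simp
    also have "\<dots> = (mat_inv (KUU \<theta> L) * KUU \<theta> L) * (Ti * Pi)" using IK(2) KUc c by (rule assoc_mult_mat[symmetric])
    also have "\<dots> = Ti * Pi" unfolding IK(4) using c by (rule left_mult_one_mat)
    finally show ?thesis .
  qed
  show ?thesis
  proof (intro exI[of _ P] conjI)
    show "P \<in> carrier_mat ?M ?M" by (rule Pc(1))
    show "invertible_mat P" by (rule IP(1))
    show "KUU \<theta> L = P * transpose_mat P" by (rule KP)
    show "\<exists>\<sigma>. bij_betw \<sigma> {..<nU L} (psi_index L) \<and>
              (\<forall>x\<in>{0..1}. \<forall>i<nU L.
                 (KxU \<theta> L x * mat_inv (transpose_mat P)) $$ (0, i) = psi \<theta> (\<sigma> i) x)"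
      using \<sigma> phi unfolding Ti_def Ps_def by (intro exI[of _ \<sigma>]) auto
    show "\<forall>f. \<forall>x\<in>{0..1}.
              KxU \<theta> L x * mat_inv (KUU \<theta> L) *\<^sub>v fU L f
              = (KxU \<theta> L x * mat_inv (transpose_mat P)) *\<^sub>v (mat_inv P *\<^sub>v fU L f)"
    proof (intro allI ballI)
      fix f x
      have fc: "fU L f \<in> carrier_vec ?M" unfolding fU_def by simp
      have "KxU \<theta> L x * mat_inv (KUU \<theta> L) = (KxU \<theta> L x * Ti) * Pi"
        unfolding Kinv using Kxc IT IP unfolding Ti_def Pi_def by (simp add: assoc_mult_mat[of _ 1 ?M _ ?M _ ?M])
      moreover have "((KxU \<theta> L x * Ti) * Pi) *\<^sub>v fU L f = (KxU \<theta> L x * Ti) *\<^sub>v (Pi *\<^sub>v fU L f)"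
      proof (rule assoc_mult_mat_vec[OF _ _ fc])
        show "KxU \<theta> L x * Ti \<in> carrier_mat 1 ?M" using Kxc[of x] IT(2) unfolding Ti_def by simp
        show "Pi \<in> carrier_mat ?M ?M" using IP(2) unfolding Pi_def .
      qed
      ultimately show "KxU \<theta> L x * mat_inv (KUU \<theta> L) *\<^sub>v fU L f
              = (KxU \<theta> L x * mat_inv (transpose_mat P)) *\<^sub>v (mat_inv P *\<^sub>v fU L f)"
        unfolding Ti_def Pi_def by simp
    qed
    show "\<forall>(\<Omega> :: 'w measure) f. prob_space \<Omega> \<longrightarrow> centered_GP \<Omega> f (expK \<theta>) \<longrightarrow>
              centered_mvn \<Omega> (\<lambda>\<omega>. mat_inv P *\<^sub>v fU L (f \<omega>)) (nU L) (1\<^sub>m (nU L))"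
    proof (intro allI impI)
      fix \<Omega> :: "'w measure" and f :: "'w \<Rightarrow> real \<Rightarrow> real"
      assume GP: "centered_GP \<Omega> f (expK \<theta>)"
      define ts where "ts = map (ipt L) [0..<nU L]"
      have lts: "length ts = nU L" unfolding ts_def by simp
      have sts: "set ts \<subseteq> {0..1}" using ipt01 by (auto simp: ts_def)
      have vf: "vec (nU L) (\<lambda>i. f \<omega> (ts ! i)) = fU L (f \<omega>)" for \<omega>
        unfolding fU_def ts_def by (intro eq_vecI) auto
      have mK: "mat (nU L) (nU L) (\<lambda>(i,j). expK \<theta> (ts!i) (ts!j)) = KUU \<theta> L"
        unfolding KUU_def ts_def by (intro eq_matI) auto
      from GP sts have "centered_mvn \<Omega> (\<lambda>\<omega>. vec (length ts) (\<lambda>i. f \<omega> (ts ! i))) (length ts)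
          (mat (length ts) (length ts) (\<lambda>(i,j). expK \<theta> (ts ! i) (ts ! j)))"
        unfolding centered_GP_def by blast
      then have mvn: "centered_mvn \<Omega> (\<lambda>\<omega>. fU L (f \<omega>)) (nU L) (KUU \<theta> L)"
        unfolding lts vf mK .
      have fc: "fU L (f \<omega>) \<in> carrier_vec ?M" for \<omega> unfolding fU_def by (rule carrier_vecI) simp
      show "centered_mvn \<Omega> (\<lambda>\<omega>. mat_inv P *\<^sub>v fU L (f \<omega>)) ?M (1\<^sub>m ?M)"
        by (rule gp_part[OF Pc(1) IP(2) IP(4) KP mvn fc])
    qed
    show "\<forall>l m. 1 \<le> l \<and> odd m \<and> m < 2 ^ l \<longrightarrow>
              (\<forall>x\<in>{0..1}. x \<notin> {(real m - 1) / 2 ^ l .. (real m + 1) / 2 ^ l} \<longrightarrow> psi \<theta> (l, m) x = 0)"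
      using psi_zero_out by auto
  qed
qed

end
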